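(* For a compact Hausdorff space $(X,\tau)$ the following are equivalent: (1) $X$ has the property $\textsf{S}_1(\mathcal{O},\mathcal{O})$; (2) TWO has a winning strategy in the game ${\sf G}_1(\mathcal{O},\mathcal{O})$.
   Context: $\mathcal{O}$: open covers of $X$. $\textsf{S}_1(\mathcal{O},\mathcal{O})$: for every sequence $(\mathcal{U}_n)$ of open covers there are $U_n\in\mathcal{U}_n$ with $\{U_n:n\in\mathbb{N}\}$ covering $X$. Game ${\sf G}_1(\mathcal{O},\mathcal{O})$: in inning $n\in\mathbb{N}$ ONE chooses an open cover $O_n$ of $X$, TWO responds with $T_n\in O_n$; TWO wins if $\{T_n:n\in\mathbb{N}\}$ covers $X$, otherwise ONE wins. *)

theory Defs
  imports "HOL-Analysis.Analysis"
begin

definition open_cover :: "'a topology \<Rightarrow> 'a set set \<Rightarrow> bool" where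
  "open_cover X \<U> \<longleftrightarrow> (\<forall>U\<in>\<U>. openin X U) \<and> \<Union>\<U> = topspace X"

definition S1_OO :: "'a topology \<Rightarrow> bool" where
  "S1_OO X \<longleftrightarrow>
     (\<forall>\<U> :: nat \<Rightarrow> 'a set set. (\<forall>n. open_cover X (\<U> n)) \<longrightarrow>
        (\<exists>U :: nat \<Rightarrow> 'a set. (\<forall>n. U n \<in> \<U> n) \<and> topspace X \<subseteq> (\<Union>n. U n)))"

text \<open>A strategy for TWO in G_1(O,O): given the finite list of covers played by ONE so far
  (the last one being the current move), TWO chooses a member of the current cover.\<close>
definition TWO_strategy_G1_OO :: "'a topology \<Rightarrow> ('a set set list \<Rightarrow> 'a set) \<Rightarrow> bool" where
  "TWO_strategy_G1_OO X \<sigma> \<longleftrightarrow>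
     (\<forall>s C0. (\<forall>C\<in>set s. open_cover X C) \<longrightarrow> open_cover X C0 \<longrightarrow> \<sigma> (s @ [C0]) \<in> C0)"

definition TWO_winning_G1_OO :: "'a topology \<Rightarrow> ('a set set list \<Rightarrow> 'a set) \<Rightarrow> bool" where
  "TWO_winning_G1_OO X \<sigma> \<longleftrightarrow> TWO_strategy_G1_OO X \<sigma> \<and>
     (\<forall>\<O> :: nat \<Rightarrow> 'a set set. (\<forall>n. open_cover X (\<O> n)) \<longrightarrow>
        topspace X \<subseteq> (\<Union>n. \<sigma> (map \<O> [0..<Suc n])))"

definition TWO_has_winning_strategy_G1_OO :: "'a topology \<Rightarrow> bool" where
  "TWO_has_winning_strategy_G1_OO X \<longleftrightarrow> (\<exists>\<sigma>. TWO_winning_G1_OO X \<sigma>)"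

end

theory Submission
  imports Defs
begin

inductive good :: "'a topology \<Rightarrow> 'a set \<Rightarrow> bool" for X where
  good_empty: "good X {}"
| good_step: "(\<forall>C. open_cover X C \<longrightarrow> (\<exists>U\<in>C. good X (K - U))) \<Longrightarrow> good X K"

lemma good_mono: "good X K \<Longrightarrow> K' \<subseteq> K \<Longrightarrow> good X K'"
proof (induction K arbitrary: K' rule: good.induct)
  case good_empty
  then show ?case by (simp add: good.good_empty)
next
  case (good_step K)
  show ?case
  proof (rule good.good_step, intro allI impI)
    fix C assume "open_cover X C"
    then obtain U where "U \<in> C" "good X (K - U)" "\<forall>K''. K'' \<subseteq> K - U \<longrightarrow> good X K''"
      using good_step.IH by blast
    then show "\<exists>U\<in>C. good X (K' - U)" using good_step.prems by blast
  qed
qed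

lemma good_Un: "good X K1 \<Longrightarrow> good X K2 \<Longrightarrow> good X (K1 \<union> K2)"
proof (induction K1 rule: good.induct)
  case good_empty
  then show ?case by simp
next
  case (good_step K)
  show ?case
  proof (rule good.good_step, intro allI impI)
    fix C assume "open_cover X C"
    then obtain U where "U \<in> C" "good X (K - U) \<and> (good X K2 \<longrightarrow> good X ((K - U) \<union> K2))"
      using good_step.IH by blast
    then have "good X ((K - U) \<union> K2)" using good_step.prems by blast
    then show "\<exists>U\<in>C. good X (K \<union> K2 - U)"
      using good_mono[of X "(K - U) \<union> K2" "K \<union> K2 - U"] \<open>U \<in> C\<close> by blast
  qed
qed

lemma good_Union: "finite F \<Longrightarrow> (\<And>K. K \<in> F \<Longrightarrow> good X K) \<Longrightarrow> good X (\<Union>F)"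
  by (induction F rule: finite_induct) (auto intro: good_Un good_empty)

lemma good_compact:
  assumes "compactin X S" and "\<And>x. x \<in> S \<Longrightarrow> \<exists>N. openin X N \<and> x \<in> N \<and> good X N"
  shows "good X S"
proof -
  have "S \<subseteq> \<Union>{N. openin X N \<and> good X N}" using assms(2) by blast
  then obtain F where F: "finite F" "F \<subseteq> {N. openin X N \<and> good X N}" "S \<subseteq> \<Union>F"
    using compactinD[OF assms(1), of "{N. openin X N \<and> good X N}"] by auto
  then have "good X (\<Union>F)" by (intro good_Union) auto
  then show ?thesis using F good_mono by blast
qed

definition covers_from :: "'a topology \<Rightarrow> 'a set \<Rightarrow> ('a set set list \<Rightarrow> 'a set) \<Rightarrow> bool" where
  "covers_from X K \<tau> \<longleftrightarrow> TWO_strategy_G1_OO X \<tau> \<and>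
     (\<forall>Q :: nat \<Rightarrow> 'a set set. (\<forall>n. open_cover X (Q n)) \<longrightarrow> K \<subseteq> (\<Union>n. \<tau> (map Q [0..<Suc n])))"

lemma cover_nonempty: "topspace X \<noteq> {} \<Longrightarrow> open_cover X C \<Longrightarrow> C \<noteq> {}"
  unfolding open_cover_def by (metis Union_empty)

lemma good_strategy:
  assumes ne: "topspace X \<noteq> {}"
  shows "good X K \<Longrightarrow> \<exists>\<tau>. covers_from X K \<tau>"
proof (induction K rule: good.induct)
  case good_empty
  have "TWO_strategy_G1_OO X (\<lambda>l. SOME U. U \<in> last l)"
    unfolding TWO_strategy_G1_OO_def
  proof (intro allI impI)
    fix s and C0 :: "'a set set" assume "open_cover X C0"
    then have "C0 \<noteq> {}" by (rule cover_nonempty[OF ne])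
    then show "(SOME U. U \<in> last (s @ [C0])) \<in> C0" by (simp add: some_in_eq)
  qed
  then show ?case unfolding covers_from_def by blast
next
  case (good_step K)
  define uu where "uu C = (SOME U. U \<in> C \<and> (\<exists>\<tau>. covers_from X (K - U) \<tau>))" for C
  define tt where "tt C = (SOME \<tau>. covers_from X (K - uu C) \<tau>)" for C
  have uu: "uu C \<in> C" and tt: "covers_from X (K - uu C) (tt C)" if "open_cover X C" for C
  proof -
    have "\<exists>U. U \<in> C \<and> (\<exists>\<tau>. covers_from X (K - U) \<tau>)" using good_step.IH that by blast
    then have "uu C \<in> C \<and> (\<exists>\<tau>. covers_from X (K - uu C) \<tau>)"
      unfolding uu_def by (rule someI_ex)
    then show "uu C \<in> C" by blast
    from \<open>uu C \<in> C \<and> _\<close> have "\<exists>\<tau>. covers_from X (K - uu C) \<tau>" by blast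
    then show "covers_from X (K - uu C) (tt C)"
      unfolding tt_def by (rule someI_ex)
  qed
  define \<tau> where "\<tau> l = (if length l \<le> 1 then uu (hd l) else tt (hd l) (tl l))" for l
  have strat: "TWO_strategy_G1_OO X \<tau>"
    unfolding TWO_strategy_G1_OO_def
  proof (intro allI impI)
    fix s and C0 :: "'a set set" assume s: "\<forall>C\<in>set s. open_cover X C" and C0: "open_cover X C0"
    show "\<tau> (s @ [C0]) \<in> C0"
    proof (cases s)
      case Nil
      then show ?thesis using uu[OF C0] by (simp add: \<tau>_def)
    next
      case (Cons C s')
      then have "open_cover X C" "\<forall>C\<in>set s'. open_cover X C" using s by auto
      then have "TWO_strategy_G1_OO X (tt C)" using tt[of C] unfolding covers_from_def by blast
      then have "tt C (s' @ [C0]) \<in> C0"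
        using \<open>\<forall>C\<in>set s'. open_cover X C\<close> C0 unfolding TWO_strategy_G1_OO_def by blast
      then show ?thesis using Cons by (simp add: \<tau>_def)
    qed
  qed
  have "K \<subseteq> (\<Union>n. \<tau> (map Q [0..<Suc n]))" if Q: "\<forall>n. open_cover X (Q n)" for Q
  proof
    fix x assume x: "x \<in> K"
    show "x \<in> (\<Union>n. \<tau> (map Q [0..<Suc n]))"
    proof (cases "x \<in> uu (Q 0)")
      case True
      then have "x \<in> \<tau> (map Q [0..<Suc 0])" by (simp add: \<tau>_def)
      then show ?thesis by blast
    next
      case False
      have Q1: "\<forall>n. open_cover X ((\<lambda>i. Q (Suc i)) n)" using Q by blast
      have "covers_from X (K - uu (Q 0)) (tt (Q 0))" using tt Q by blast
      then have "K - uu (Q 0) \<subseteq> (\<Union>n. tt (Q 0) (map (\<lambda>i. Q (Suc i)) [0..<Suc n]))"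
        unfolding covers_from_def using Q1 by (elim conjE allE[of _ "\<lambda>i. Q (Suc i)"]) blast
      then obtain n where "x \<in> tt (Q 0) (map (\<lambda>i. Q (Suc i)) [0..<Suc n])"
        using x False by blast
      moreover have "\<tau> (map Q [0..<Suc (Suc n)]) = tt (Q 0) (map (\<lambda>i. Q (Suc i)) [0..<Suc n])"
        unfolding map_upt_Suc[of Q "Suc n"] by (simp add: \<tau>_def)
      ultimately show ?thesis by (intro UN_I[of "Suc n"]) auto
    qed
  qed
  then show ?case using strat unfolding covers_from_def by blast
qed


lemma regular_shrink:
  assumes "regular_space X" "openin X W" "x \<in> W"
  shows "\<exists>U. openin X U \<and> x \<in> U \<and> X closure_of U \<subseteq> W"
proof -
  have "closedin X (topspace X - W)" using assms(2) by blast
  moreover have "x \<in> topspace X - (topspace X - W)" using assms(2,3) openin_subset by blast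
  ultimately obtain U where "openin X U" "x \<in> U" "disjnt (topspace X - W) (X closure_of U)"
    using assms(1) unfolding regular_space by blast
  moreover have "X closure_of U \<subseteq> topspace X" by (rule closure_of_subset_topspace)
  ultimately show ?thesis unfolding disjnt_def by blast
qed

lemma split_exists:
  assumes H: "Hausdorff_space X" and R: "regular_space X"
    and noiso: "\<forall>x\<in>P. \<forall>W. openin X W \<and> x \<in> W \<longrightarrow> (\<exists>y\<in>P \<inter> W. y \<noteq> x)"
    and W: "openin X W" "W \<inter> P \<noteq> {}"
  shows "\<exists>A B. openin X A \<and> openin X B \<and> A \<inter> P \<noteq> {} \<and> B \<inter> P \<noteq> {} \<and>
     X closure_of A \<subseteq> W \<and> X closure_of B \<subseteq> W \<and> X closure_of A \<inter> X closure_of B = {}"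
proof -
  obtain x where x: "x \<in> W" "x \<in> P" using W by blast
  then obtain y where y: "y \<in> P" "y \<in> W" "y \<noteq> x" using noiso W by blast
  have "x \<in> topspace X" "y \<in> topspace X" using x y W openin_subset by blast+
  then obtain G K where GK: "openin X G" "openin X K" "x \<in> G" "y \<in> K" "disjnt G K"
    using H y unfolding Hausdorff_space_def by metis
  obtain A where A: "openin X A" "x \<in> A" "X closure_of A \<subseteq> W \<inter> G"
    using regular_shrink[OF R, of "W \<inter> G" x] GK W x by blast
  obtain B where B: "openin X B" "y \<in> B" "X closure_of B \<subseteq> W \<inter> K"
    using regular_shrink[OF R, of "W \<inter> K" y] GK W y by blast
  show ?thesis
    apply (rule exI[of _ A], rule exI[of _ B])
    using A B x y GK unfolding disjnt_def by blast
qed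

primrec tree :: "('a set \<Rightarrow> 'a set \<times> 'a set) \<Rightarrow> 'a set \<Rightarrow> bool list \<Rightarrow> 'a set" where
  "tree spl W0 [] = W0"
| "tree spl W0 (b # s) = (if b then fst (spl (tree spl W0 s)) else snd (spl (tree spl W0 s)))"

lemma finite_bool_lists: "finite {s :: bool list. length s = n}"
  using finite_lists_length_eq[of "UNIV :: bool set" n] by simp

lemma not_S1_if_perfect:
  assumes C: "compact_space X" and H: "Hausdorff_space X"
    and P: "P \<subseteq> topspace X" "P \<noteq> {}"
    and noiso: "\<forall>x\<in>P. \<forall>W. openin X W \<and> x \<in> W \<longrightarrow> (\<exists>y\<in>P \<inter> W. y \<noteq> x)"
  shows "\<not> S1_OO X"
proof
  assume S1: "S1_OO X"
  have R: "regular_space X" using C H compact_Hausdorff_imp_regular_space by blast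
  define good_pair where "good_pair W AB \<longleftrightarrow> openin X (fst AB) \<and> openin X (snd AB) \<and>
     fst AB \<inter> P \<noteq> {} \<and> snd AB \<inter> P \<noteq> {} \<and>
     X closure_of (fst AB) \<subseteq> W \<and> X closure_of (snd AB) \<subseteq> W \<and>
     X closure_of (fst AB) \<inter> X closure_of (snd AB) = {}" for W AB
  have "\<forall>W. \<exists>AB. openin X W \<and> W \<inter> P \<noteq> {} \<longrightarrow> good_pair W AB"
  proof
    fix W show "\<exists>AB. openin X W \<and> W \<inter> P \<noteq> {} \<longrightarrow> good_pair W AB"
    proof (cases "openin X W \<and> W \<inter> P \<noteq> {}")
      case True
      then obtain A B where "openin X A \<and> openin X B \<and> A \<inter> P \<noteq> {} \<and> B \<inter> P \<noteq> {} \<and>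
         X closure_of A \<subseteq> W \<and> X closure_of B \<subseteq> W \<and> X closure_of A \<inter> X closure_of B = {}"
        using split_exists[OF H R noiso conjunct1[OF True] conjunct2[OF True]] by blast
      then have "good_pair W (A, B)" unfolding good_pair_def by simp
      then show ?thesis by blast
    qed blast
  qed
  then have "\<exists>spl. \<forall>W. openin X W \<and> W \<inter> P \<noteq> {} \<longrightarrow> good_pair W (spl W)"
    by (rule choice)
  then obtain spl where spl0: "\<forall>W. openin X W \<and> W \<inter> P \<noteq> {} \<longrightarrow> good_pair W (spl W)"
    by (elim exE)
  have spl: "good_pair W (spl W)" if "openin X W" "W \<inter> P \<noteq> {}" for W
    using spl0 that by simp
  define T where "T = tree spl (topspace X)"
  have inv: "openin X (T s) \<and> T s \<inter> P \<noteq> {}" for s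
  proof (induction s)
    case Nil
    then show ?case using P by (auto simp: T_def)
  next
    case (Cons b s)
    then have "good_pair (T s) (spl (T s))" using spl by blast
    then show ?case unfolding good_pair_def T_def by simp
  qed
  have gp: "good_pair (T s) (spl (T s))" for s using spl inv by blast
  have sub: "X closure_of (T (b # s)) \<subseteq> T s" for b s
    using gp[of s] unfolding good_pair_def T_def by (cases b) auto
  have disj: "X closure_of (T (True # s)) \<inter> X closure_of (T (False # s)) = {}" for s
    using gp[of s] unfolding good_pair_def T_def by simp
  define cl where "cl s = X closure_of (T s)" for s
  define V where "V n f = topspace X - (\<Union>s\<in>{s. length s = n}. cl (f s # s))" for n and f :: "bool list \<Rightarrow> bool"
  define \<U> where "\<U> n = range (V n)" for n
  have cov: "open_cover X (\<U> n)" for n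
    unfolding open_cover_def
  proof
    show "\<forall>U\<in>\<U> n. openin X U"
    proof
      fix U assume "U \<in> \<U> n"
      then obtain f where Uf: "U = V n f" unfolding \<U>_def by blast
      have "closedin X (\<Union>s\<in>{s. length s = n}. cl (f s # s))"
        by (rule closedin_Union) (auto simp: cl_def finite_bool_lists)
      then show "openin X U" unfolding Uf V_def by blast
    qed
    show "\<Union> (\<U> n) = topspace X"
    proof
      show "\<Union> (\<U> n) \<subseteq> topspace X" unfolding \<U>_def V_def by blast
      show "topspace X \<subseteq> \<Union> (\<U> n)"
      proof
        fix x assume x: "x \<in> topspace X"
        define f where "f s = (x \<notin> cl (True # s))" for s
        have "x \<notin> cl (f s # s)" for s
          using disj[of s] unfolding f_def cl_def by (cases "x \<in> X closure_of T (True # s)") auto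
        then have "x \<in> V n f" unfolding V_def using x by blast
        then show "x \<in> \<Union> (\<U> n)" unfolding \<U>_def by blast
      qed
    qed
  qed
  obtain U where U: "\<And>n. U n \<in> \<U> n" "topspace X \<subseteq> (\<Union>n. U n)"
    using S1 cov unfolding S1_OO_def by blast
  have "\<forall>n. \<exists>f. U n = V n f" using U(1) unfolding \<U>_def by blast
  then obtain F where F: "\<And>n. U n = V n (F n)" by metis
  define p where "p = rec_nat [] (\<lambda>n s. F n s # s)"
  have p0: "p 0 = []" and pS: "p (Suc n) = F n (p n) # p n" for n by (simp_all add: p_def)
  have lp: "length (p n) = n" for n by (induction n) (simp_all add: p0 pS)
  have "(\<Inter>n. cl (p n)) \<noteq> {}"
  proof (rule compact_space_imp_nest[OF C])
    show "closedin X (cl (p n))" for n by (simp add: cl_def)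
    show "cl (p n) \<noteq> {}" for n
    proof -
      have "T (p n) \<noteq> {}" using inv[of "p n"] by blast
      moreover have "T (p n) \<subseteq> topspace X" using inv[of "p n"] openin_subset by blast
      ultimately show ?thesis unfolding cl_def using closure_of_eq_empty[of "T (p n)" X] by simp
    qed
    show "decseq (\<lambda>n. cl (p n))"
    proof (rule decseq_SucI)
      fix n
      have "cl (p (Suc n)) \<subseteq> T (p n)" unfolding pS cl_def by (rule sub)
      also have "T (p n) \<subseteq> cl (p n)"
        unfolding cl_def using inv[of "p n"] openin_subset closure_of_subset[of "T (p n)" X] by blast
      finally show "cl (p (Suc n)) \<subseteq> cl (p n)" .
    qed
  qed
  then obtain z where z: "\<And>n. z \<in> cl (p n)" by blast
  have "z \<in> topspace X" using z[of 0] closure_of_subset_topspace[of X "T (p 0)"] unfolding cl_def by blast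
  then obtain n where "z \<in> U n" using U(2) by blast
  then have zn: "z \<notin> (\<Union>s\<in>{s. length s = n}. cl (F n s # s))" unfolding F V_def by blast
  have "z \<in> cl (F n (p n) # p n)" using z[of "Suc n"] by (simp add: pS)
  then show False using zn lp[of n] by blast
qed

lemma bad_imp_perfect:
  assumes C: "compact_space X" and H: "Hausdorff_space X"
    and bad: "\<not> good X (topspace X)"
  shows "\<exists>P. P \<subseteq> topspace X \<and> P \<noteq> {} \<and>
    (\<forall>x\<in>P. \<forall>W. openin X W \<and> x \<in> W \<longrightarrow> (\<exists>y\<in>P \<inter> W. y \<noteq> x))"
proof -
  have R: "regular_space X" using C H compact_Hausdorff_imp_regular_space by blast
  define D where "D = {x \<in> topspace X. \<not> (\<exists>N. openin X N \<and> x \<in> N \<and> good X N)}"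
  have "D \<noteq> {}"
  proof
    assume "D = {}"
    then have "good X (topspace X)"
      using C unfolding compact_space_def by (intro good_compact) (auto simp: D_def)
    then show False using bad by blast
  qed
  moreover have "\<exists>y\<in>D \<inter> W. y \<noteq> x" if x: "x \<in> D" and W: "openin X W" "x \<in> W" for x W
  proof (rule ccontr)
    assume nx: "\<not> (\<exists>y\<in>D \<inter> W. y \<noteq> x)"
    obtain V where V: "openin X V" "x \<in> V" "X closure_of V \<subseteq> W"
      using regular_shrink[OF R W] by blast
    have "good X (X closure_of V)"
    proof (rule good_step, intro allI impI)
      fix Cv assume Cv: "open_cover X Cv"
      have "x \<in> topspace X" using x D_def by blast
      then obtain U where U: "U \<in> Cv" "x \<in> U" using Cv unfolding open_cover_def by blast
      have "compactin X (X closure_of V - U)"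
        using U Cv C unfolding open_cover_def by (intro closedin_compact_space) auto
      moreover have "\<exists>N. openin X N \<and> y \<in> N \<and> good X N" if y: "y \<in> X closure_of V - U" for y
      proof -
        have "y \<in> W" "y \<noteq> x" "y \<in> topspace X"
          using y V U closure_of_subset_topspace[of X V] by blast+
        then have "y \<notin> D" using nx by blast
        then show ?thesis using \<open>y \<in> topspace X\<close> unfolding D_def by blast
      qed
      ultimately have "good X (X closure_of V - U)" by (rule good_compact)
      then show "\<exists>U\<in>Cv. good X (X closure_of V - U)" using U by blast
    qed
    then have "good X V" using good_mono closure_of_subset openin_subset V(1) by metis
    then show False using x V unfolding D_def by blast
  qed
  moreover have "D \<subseteq> topspace X" unfolding D_def by blast
  ultimately show ?thesis by blast
qed


lemma empty_case:
  assumes "topspace X = {}"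
  shows "\<not> S1_OO X" "\<not> TWO_has_winning_strategy_G1_OO X"
proof -
  have oc: "open_cover X {}" unfolding open_cover_def using assms by simp
  show "\<not> S1_OO X"
  proof
    assume "S1_OO X"
    then obtain U :: "nat \<Rightarrow> 'a set" where "\<forall>n. U n \<in> ({} :: 'a set set)"
      using oc unfolding S1_OO_def by (elim allE[of _ "\<lambda>n. {}"]) blast
    then show False by blast
  qed
  show "\<not> TWO_has_winning_strategy_G1_OO X"
  proof
    assume "TWO_has_winning_strategy_G1_OO X"
    then obtain \<sigma> where "TWO_strategy_G1_OO X \<sigma>"
      unfolding TWO_has_winning_strategy_G1_OO_def TWO_winning_G1_OO_def by blast
    then have "\<forall>s C0. (\<forall>C\<in>set s. open_cover X C) \<longrightarrow> open_cover X C0 \<longrightarrow> \<sigma> (s @ [C0]) \<in> C0"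
      unfolding TWO_strategy_G1_OO_def by simp
    then have "\<sigma> ([] @ [{}]) \<in> {}" using oc by (metis empty_iff list.set(1))
    then show False by blast
  qed
qed

theorem lemma8p4:
  fixes X :: "'a topology"
  assumes "compact_space X" and "Hausdorff_space X"
  shows "S1_OO X \<longleftrightarrow> TWO_has_winning_strategy_G1_OO X"
proof (cases "topspace X = {}")
  case True
  then show ?thesis using empty_case by blast
next
  case ne: False
  show ?thesis
  proof
    assume S1: "S1_OO X"
    have "good X (topspace X)"
    proof (rule ccontr)
      assume "\<not> good X (topspace X)"
      then obtain P where "P \<subseteq> topspace X" "P \<noteq> {}"
        "\<forall>x\<in>P. \<forall>W. openin X W \<and> x \<in> W \<longrightarrow> (\<exists>y\<in>P \<inter> W. y \<noteq> x)"
        using bad_imp_perfect[OF assms] by blast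
      then have "\<not> S1_OO X" using not_S1_if_perfect[OF assms] by blast
      then show False using S1 by blast
    qed
    then obtain \<tau> where "covers_from X (topspace X) \<tau>" using good_strategy[OF ne] by blast
    then show "TWO_has_winning_strategy_G1_OO X"
      unfolding TWO_has_winning_strategy_G1_OO_def TWO_winning_G1_OO_def covers_from_def by blast
  next
    assume "TWO_has_winning_strategy_G1_OO X"
    then obtain \<sigma> where st: "TWO_strategy_G1_OO X \<sigma>"
      and win: "\<forall>Q :: nat \<Rightarrow> 'a set set. (\<forall>n. open_cover X (Q n)) \<longrightarrow>
        topspace X \<subseteq> (\<Union>n. \<sigma> (map Q [0..<Suc n]))"
      unfolding TWO_has_winning_strategy_G1_OO_def TWO_winning_G1_OO_def by blast
    show "S1_OO X"
      unfolding S1_OO_def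
    proof (intro allI impI)
      fix \<U> :: "nat \<Rightarrow> 'a set set" assume cov: "\<forall>n. open_cover X (\<U> n)"
      have "\<sigma> (map \<U> [0..<Suc n]) \<in> \<U> n" for n
      proof -
        have "\<forall>C\<in>set (map \<U> [0..<n]). open_cover X C" using cov by auto
        then have "\<sigma> (map \<U> [0..<n] @ [\<U> n]) \<in> \<U> n"
          using st cov unfolding TWO_strategy_G1_OO_def by blast
        then show ?thesis by simp
      qed
      moreover have "topspace X \<subseteq> (\<Union>n. \<sigma> (map \<U> [0..<Suc n]))"
        using win cov by blast
      ultimately show "\<exists>U. (\<forall>n. U n \<in> \<U> n) \<and> topspace X \<subseteq> (\<Union>n. U n)"
        by (intro exI[of _ "\<lambda>n. \<sigma> (map \<U> [0..<Suc n])"]) blast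
    qed
  qed
qed

end
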